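(* Under the Gaussian copula model, for any $m\in\mathbb N$, $\alpha\in(0,1]$, $\rho\in(0,1]$ and $\delta\in(0,1]$, there exists $\bar n=\bar n(\alpha,\rho,\delta)<\infty$ such that $$p^{\mathrm{G}}_{\mathrm{success}}(n,m,\alpha,\rho)\ge1-\delta\quad\text{for all } n\ge\bar n.$$
   Context: Ordinal optimisation model: let $(Z_1,X_1),\dots,(Z_n,X_n)$ be i.i.d. copies of a pair $(Z,X)$ of real random variables. Order $Z_1,\dots,Z_n$ increasingly as $Z_{1:n}\le\dots\le Z_{n:n}$ and let $X_{\langle i\rangle}$ denote the $X$-value paired with $Z_{i:n}$. Let $x^*_\alpha$ be the $\alpha$-quantile of $X$. The success probability is $\Pr(\min_{1\le i\le m}X_{\langle i\rangle}\le x^*_\alpha)$. Gaussian copula model with correlation $\rho$: $Z,X$ have continuous marginal CDFs $F_Z,F_X$ and joint CDF $\boldsymbol\Phi_{\rho}(\Phi^{-1}(F_Z(z)),\Phi^{-1}(F_X(x)))$, with $\Phi$ the standard normal CDF and $\boldsymbol\Phi_\rho$ the standard bivariate normal CDF with correlation $\rho$. The success probability in this model is $p^{\mathrm{G}}_{\mathrm{success}}(n,m,\alpha,\rho)$ (defined for $n\ge m$). *)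

theory Defs
  imports "HOL-Probability.Probability"
begin

definition std_normal :: "real measure" where
  "std_normal = density lborel std_normal_density"

definition Phi :: "real \<Rightarrow> real" where
  "Phi x = measure std_normal {..x}"

text \<open>The first component plays the role of Z, the second the role of X.\<close>
definition biv_normal :: "real \<Rightarrow> (real \<times> real) measure" where
  "biv_normal \<rho> = distr (std_normal \<Otimes>\<^sub>M std_normal) (borel \<Otimes>\<^sub>M borel)
     (\<lambda>(u, w). (u, \<rho> * u + sqrt (1 - \<rho>\<^sup>2) * w))"

text \<open>Success event for a sample omega of n pairs (Z_i, X_i), i < n: some sample whose
  Z-value is among the m smallest (i.e. fewer than m Z-values are strictly smaller)
  has X-value at most the alpha-quantile of X, expressed as Phi(X_i) \<le> alpha
  (X is standard normal here).\<close>
definition success_event :: "nat \<Rightarrow> nat \<Rightarrow> real \<Rightarrow> (nat \<Rightarrow> real \<times> real) \<Rightarrow> bool" where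
  "success_event n m \<alpha> \<omega> \<longleftrightarrow>
     (\<exists>i<n. card {j. j < n \<and> fst (\<omega> j) < fst (\<omega> i)} < m \<and> Phi (snd (\<omega> i)) \<le> \<alpha>)"

definition p_success_G :: "nat \<Rightarrow> nat \<Rightarrow> real \<Rightarrow> real \<Rightarrow> real" where
  "p_success_G n m \<alpha> \<rho> =
     measure (PiM {..<n} (\<lambda>_. biv_normal \<rho>))
       {\<omega> \<in> space (PiM {..<n} (\<lambda>_. biv_normal \<rho>)). success_event n m \<alpha> \<omega>}"

end

theory Submission
  imports Defs
begin


lemma ps_S: "prob_space std_normal"
  unfolding std_normal_def by (rule prob_space_normal_density) simp

lemma sets_S[measurable_cong]: "sets std_normal = sets borel"
  unfolding std_normal_def by simp

lemma rd_S: "real_distribution std_normal"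
  unfolding real_distribution_def real_distribution_axioms_def using ps_S sets_S by simp

lemma Phi_cdf: "Phi = cdf std_normal"
  unfolding Phi_def cdf_def by auto

lemma null_S: "A \<in> null_sets lborel \<Longrightarrow> A \<in> null_sets std_normal"
  proof -
  assume "A \<in> null_sets lborel"
  then have "AE y in lborel. y \<notin> A" by (rule AE_not_in)
  then have "AE y in lborel. y \<in> A \<longrightarrow> std_normal_density y = 0" by eventually_elim auto
  then show ?thesis using \<open>A \<in> null_sets lborel\<close> unfolding std_normal_def by (subst null_sets_density_iff) auto
qed

lemma Phi_cont: "isCont Phi x"
proof -
  interpret real_distribution std_normal by (rule rd_S)
  have "{x} \<in> null_sets std_normal" by (rule null_S) (simp add: countable_imp_null_set_lborel)
  then show ?thesis unfolding Phi_cdf by (subst isCont_cdf) (simp add: measure_def null_setsD1)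
qed

lemma Phi_pos: "Phi x > 0"
proof (rule ccontr)
  interpret real_distribution std_normal by (rule rd_S)
  assume "\<not> Phi x > 0"
  then have "measure std_normal {..x} = 0" unfolding Phi_def using measure_nonneg[of std_normal "{..x}"] by linarith
  then have "{..x} \<in> null_sets std_normal" by (simp add: emeasure_eq_measure null_setsI)
  then have "AE y in lborel. y \<in> {..x} \<longrightarrow> std_normal_density y = 0"
    unfolding std_normal_def by (subst (asm) null_sets_density_iff) auto
  then have "AE y in lborel. y \<notin> {x - 1..x}"
  proof eventually_elim
    case (elim y)
    have "std_normal_density y > 0" by (rule normal_density_pos) simp
    then show ?case using elim by auto
  qed
  then have "emeasure lborel {x - 1..x} = 0"
    by (subst (asm) AE_iff_measurable[of "{x - 1..x}"]) auto
  then show False by simp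
qed



lemma space_S[simp]: "space std_normal = UNIV"
  using sets_eq_imp_space_eq[OF sets_S] by simp

lemma set_fst_gt: "{p::real\<times>real. t < fst p} \<in> sets (borel \<Otimes>\<^sub>M borel)"
proof -
  have "{p::real\<times>real. t < fst p} = {p \<in> space (borel \<Otimes>\<^sub>M borel). t < fst p}" by (simp add: space_pair_measure)
  also have "\<dots> \<in> sets (borel \<Otimes>\<^sub>M borel)" by measurable
  finally show ?thesis .
qed

lemma set_bad: "{p::real\<times>real. fst p \<le> t \<and> q < snd p} \<in> sets (borel \<Otimes>\<^sub>M borel)"
proof -
  have "{p::real\<times>real. fst p \<le> t \<and> q < snd p} = {p \<in> space (borel \<Otimes>\<^sub>M borel). fst p \<le> t \<and> q < snd p}" by (simp add: space_pair_measure)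
  also have "\<dots> \<in> sets (borel \<Otimes>\<^sub>M borel)" by measurable
  finally show ?thesis .
qed

lemma measure_SS_Times:
  assumes "A \<in> sets borel" "B \<in> sets borel"
  shows "measure (std_normal \<Otimes>\<^sub>M std_normal) (A \<times> B) = measure std_normal A * measure std_normal B"
proof -
  interpret pair_prob_space std_normal std_normal
    by (simp add: pair_prob_space_def pair_sigma_finite_def ps_S prob_space_imp_sigma_finite)
  have "emeasure (std_normal \<Otimes>\<^sub>M std_normal) (A \<times> B) = emeasure std_normal A * emeasure std_normal B"
    using assms by (intro sigma_finite_measure.emeasure_pair_measure_Times[OF prob_space_imp_sigma_finite[OF ps_S]]) (auto simp: sets_S)
  then show ?thesis
    by (simp add: measure_def enn2real_mult)
qed

lemma ps_SS: "prob_space (std_normal \<Otimes>\<^sub>M std_normal)"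
proof -
  interpret pair_prob_space std_normal std_normal
    by (simp add: pair_prob_space_def pair_sigma_finite_def ps_S prob_space_imp_sigma_finite)
  show ?thesis by (rule P.prob_space_axioms)
qed

lemma h_meas: "(\<lambda>(u, w). (u, \<rho> * u + sqrt (1 - \<rho>\<^sup>2) * w)) \<in> measurable (std_normal \<Otimes>\<^sub>M std_normal) (borel \<Otimes>\<^sub>M borel)"
  by measurable

lemma ps_biv: "prob_space (biv_normal \<rho>)"
  unfolding biv_normal_def using ps_SS h_meas by (rule prob_space.prob_space_distr)

lemma sets_biv[measurable_cong]: "sets (biv_normal \<rho>) = sets (borel \<Otimes>\<^sub>M borel)"
  unfolding biv_normal_def by simp

lemma space_biv[simp]: "space (biv_normal \<rho>) = UNIV"
  using sets_eq_imp_space_eq[OF sets_biv[of \<rho>]] by (simp add: space_pair_measure)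

lemma biv_fst_gt: "measure (biv_normal \<rho>) {p. t < fst p} = 1 - Phi t"
proof -
  interpret S: prob_space std_normal by (rule ps_S)
  have "measure (biv_normal \<rho>) {p. t < fst p} = measure (std_normal \<Otimes>\<^sub>M std_normal) ({t<..} \<times> UNIV)"
    unfolding biv_normal_def
    by (subst measure_distr[OF h_meas]) (auto simp: space_pair_measure sets_S set_fst_gt set_bad intro!: arg_cong2[where f=measure])
  also have "\<dots> = measure std_normal {t<..}"
    using measure_SS_Times[of "{t<..}" UNIV] S.prob_space by (simp add: sets_S)
  also have "\<dots> = 1 - Phi t"
  proof -
    have "{t<..} = space std_normal - {..t}" by (auto simp: sets_eq_imp_space_eq[OF sets_S])
    then show ?thesis unfolding Phi_def using S.prob_compl[of "{..t}"] by (simp add: sets_S)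
  qed
  finally show ?thesis .
qed

lemma biv_bad:
  assumes "0 \<le> \<rho>" "\<rho> \<le> 1" "0 \<le> w0" "w0 \<le> q - \<rho> * t"
  shows "measure (biv_normal \<rho>) {p. fst p \<le> t \<and> q < snd p} \<le> Phi t * (1 - Phi w0)"
proof -
  interpret S: prob_space std_normal by (rule ps_S)
  interpret SS: prob_space "std_normal \<Otimes>\<^sub>M std_normal" by (rule ps_SS)
  let ?s = "sqrt (1 - \<rho>\<^sup>2)"
  have s0: "0 \<le> ?s" and s1: "?s \<le> 1" using assms by (auto simp: power_le_one)
  have "measure (biv_normal \<rho>) {p. fst p \<le> t \<and> q < snd p} =
        measure (std_normal \<Otimes>\<^sub>M std_normal) {(u,w). u \<le> t \<and> q < \<rho> * u + ?s * w}"
    unfolding biv_normal_def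
    by (subst measure_distr[OF h_meas]) (auto simp: space_pair_measure sets_S set_fst_gt set_bad intro!: arg_cong2[where f=measure])
  also have "\<dots> \<le> measure (std_normal \<Otimes>\<^sub>M std_normal) ({..t} \<times> {w0<..})"
  proof (rule SS.finite_measure_mono)
    show "{(u,w). u \<le> t \<and> q < \<rho> * u + ?s * w} \<subseteq> {..t} \<times> {w0<..}"
    proof safe
      fix u w assume u: "u \<le> t" and q: "q < \<rho> * u + ?s * w"
      have "\<rho> * u \<le> \<rho> * t" using u assms by (simp add: mult_left_mono)
      then have sw: "w0 < ?s * w" using q assms by linarith
      show "w0 < w"
      proof (cases "w \<le> 0")
        case True then have "?s * w \<le> 0" using s0 by (simp add: mult_nonneg_nonpos)
        then show ?thesis using sw assms by linarith
      next
        case False then have "?s * w \<le> w" using s1 by (simp add: mult_left_le_one_le)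
        then show ?thesis using sw by linarith
      qed
    qed
    show "{..t} \<times> {w0<..} \<in> sets (std_normal \<Otimes>\<^sub>M std_normal)" by (simp add: sets_S)
  qed
  also have "\<dots> = Phi t * measure std_normal {w0<..}"
    by (simp add: measure_SS_Times Phi_def)
  also have "measure std_normal {w0<..} = 1 - Phi w0"
  proof -
    have "{w0<..} = space std_normal - {..w0}" by (auto simp: sets_eq_imp_space_eq[OF sets_S])
    then show ?thesis unfolding Phi_def using S.prob_compl[of "{..w0}"] by (simp add: sets_S)
  qed
  finally show ?thesis .
qed



lemma Phi_meas[measurable]: "Phi \<in> borel_measurable borel"
  by (rule borel_measurable_continuous_onI) (simp add: continuous_at_imp_continuous_on Phi_cont)

lemma card_sum: "card {j. j < (n::nat) \<and> P j} = (\<Sum>j<n. if P j then 1 else 0 :: nat)"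
proof -
  have "{j. j < n \<and> P j} = {j \<in> {..<n}. P j}" by auto
  then show ?thesis using sum.inter_filter[where A="{..<n}" and g="\<lambda>_. 1::nat" and P=P] finite_lessThan[of n] by simp
qed

lemma succ_eq:
  "success_event n m \<alpha> \<omega> \<longleftrightarrow>
    (\<exists>i\<in>{..<n}. (\<Sum>j<n. if fst (\<omega> j) < fst (\<omega> i) then 1 else 0 :: real) < real m \<and> Phi (snd (\<omega> i)) \<le> \<alpha>)"
proof -
  have *: "real (card {j. j < n \<and> fst (\<omega> j) < fst (\<omega> i)}) = (\<Sum>j<n. if fst (\<omega> j) < fst (\<omega> i) then 1 else 0 :: real)" for i
    unfolding card_sum of_nat_sum by (intro sum.cong) auto
  show ?thesis unfolding success_event_def
  proof
    assume "\<exists>i<n. card {j. j < n \<and> fst (\<omega> j) < fst (\<omega> i)} < m \<and> Phi (snd (\<omega> i)) \<le> \<alpha>"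
    then obtain i where "i < n" "card {j. j < n \<and> fst (\<omega> j) < fst (\<omega> i)} < m" "Phi (snd (\<omega> i)) \<le> \<alpha>" by blast
    then show "\<exists>i\<in>{..<n}. (\<Sum>j<n. if fst (\<omega> j) < fst (\<omega> i) then 1 else 0 :: real) < real m \<and> Phi (snd (\<omega> i)) \<le> \<alpha>"
      using *[of i, symmetric] by (intro bexI[of _ i]) auto
  next
    assume "\<exists>i\<in>{..<n}. (\<Sum>j<n. if fst (\<omega> j) < fst (\<omega> i) then 1 else 0 :: real) < real m \<and> Phi (snd (\<omega> i)) \<le> \<alpha>"
    then obtain i where "i < n" "(\<Sum>j<n. if fst (\<omega> j) < fst (\<omega> i) then 1 else 0 :: real) < real m" "Phi (snd (\<omega> i)) \<le> \<alpha>" by blast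
    then show "\<exists>i<n. card {j. j < n \<and> fst (\<omega> j) < fst (\<omega> i)} < m \<and> Phi (snd (\<omega> i)) \<le> \<alpha>"
      using *[of i, symmetric] by auto
  qed
qed

lemma succ_sets:
  "{\<omega> \<in> space (PiM {..<n} (\<lambda>_. biv_normal \<rho>)). success_event n m \<alpha> \<omega>} \<in> sets (PiM {..<n} (\<lambda>_. biv_normal \<rho>))"
  unfolding succ_eq by measurable



lemma Phi_mono: "x \<le> y \<Longrightarrow> Phi x \<le> Phi y"
proof -
  interpret real_distribution std_normal by (rule rd_S)
  show "x \<le> y \<Longrightarrow> Phi x \<le> Phi y" unfolding Phi_cdf by (rule cdf_nondecreasing)
qed

lemma Phi_le1: "Phi x \<le> 1"
proof -
  interpret real_distribution std_normal by (rule rd_S)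
  show ?thesis unfolding Phi_cdf by (rule cdf_bounded_prob)
qed

lemma main_bound:
  assumes "0 < \<rho>" "\<rho> \<le> 1" "0 \<le> w0" "w0 \<le> q - \<rho> * t" "Phi q \<le> \<alpha>" "1 \<le> m"
  shows "p_success_G n m \<alpha> \<rho> \<ge> 1 - (1 - Phi t) ^ n - real n * (Phi t * (1 - Phi w0))"
proof -
  define P where "P = PiM {..<n} (\<lambda>_. biv_normal \<rho>)"
  interpret product_prob_space "\<lambda>_. biv_normal \<rho>" "{..<n}"
    by (simp add: product_prob_space_def product_prob_space_axioms_def product_sigma_finite_def
        ps_biv prob_space_imp_sigma_finite)
  define Bad where "Bad = {p::real\<times>real. fst p \<le> t \<and> q < snd p}"
  define F1 where "F1 = {\<omega> \<in> space P. \<forall>i\<in>{..<n}. \<omega> i \<in> {p. t < fst p}}"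
  define F2 where "F2 = (\<Union>i\<in>{..<n}. {\<omega> \<in> space P. \<omega> i \<in> Bad})"
  define Succ where "Succ = {\<omega> \<in> space P. success_event n m \<alpha> \<omega>}"
  have Bad_sets: "Bad \<in> sets (biv_normal \<rho>)" unfolding Bad_def using set_bad by simp
  have fg_sets: "{p::real\<times>real. t < fst p} \<in> sets (biv_normal \<rho>)" using set_fst_gt by simp
  have F1_sets: "F1 \<in> sets P" unfolding F1_def P_def using fg_sets by measurable
  have F2_sets: "F2 \<in> sets P" unfolding F2_def P_def using Bad_sets by measurable
  have Succ_sets: "Succ \<in> sets P" unfolding Succ_def P_def by (rule succ_sets)
  have sub: "space P - (F1 \<union> F2) \<subseteq> Succ"
  proof
    fix \<omega> assume w: "\<omega> \<in> space P - (F1 \<union> F2)"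
    then have ex: "\<exists>i<n. fst (\<omega> i) \<le> t" and nb: "\<And>i. i < n \<Longrightarrow> \<omega> i \<notin> Bad"
      unfolding F1_def F2_def by (auto simp: not_less)
    then obtain i1 where i1: "i1 < n" "fst (\<omega> i1) \<le> t" by blast
    define v where "v = Min ((\<lambda>j. fst (\<omega> j)) ` {..<n})"
    have "v \<in> (\<lambda>j. fst (\<omega> j)) ` {..<n}" unfolding v_def using i1 by (intro Min_in) auto
    then obtain i0 where i0: "i0 < n" "v = fst (\<omega> i0)" by auto
    have vle: "\<And>j. j < n \<Longrightarrow> v \<le> fst (\<omega> j)" unfolding v_def by (intro Min_le) auto
    have e: "{j. j < n \<and> fst (\<omega> j) < fst (\<omega> i0)} = {}" using vle i0 by force
    have c: "card {j. j < n \<and> fst (\<omega> j) < fst (\<omega> i0)} < m" unfolding e using assms by simp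
    have "fst (\<omega> i0) \<le> t" using vle[OF i1(1)] i0 i1 by simp
    then have "snd (\<omega> i0) \<le> q" using nb[OF i0(1)] unfolding Bad_def by auto
    then have "Phi (snd (\<omega> i0)) \<le> \<alpha>" using Phi_mono assms by (meson order_trans)
    then show "\<omega> \<in> Succ" using c i0 w unfolding Succ_def success_event_def by auto
  qed
  have "1 - measure P (F1 \<union> F2) = measure P (space P - (F1 \<union> F2))"
    using F1_sets F2_sets unfolding P_def by (simp add: prob_compl)
  also have "\<dots> \<le> measure P Succ"
    using sub Succ_sets unfolding P_def by (intro finite_measure_mono) auto
  finally have s1: "1 - measure P (F1 \<union> F2) \<le> measure P Succ" .
  have "measure P (F1 \<union> F2) \<le> measure P F1 + measure P F2"
    using F1_sets F2_sets unfolding P_def by (intro measure_Un_le) auto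
  moreover have "measure P F1 = (1 - Phi t) ^ n"
  proof -
    have "emeasure P F1 = (\<Prod>i\<in>{..<n}. emeasure (biv_normal \<rho>) {p. t < fst p})"
      unfolding F1_def P_def using fg_sets by (intro emeasure_PiM_Collect) auto
    also have "\<dots> = ennreal ((1 - Phi t) ^ n)"
      using biv_fst_gt[of \<rho> t] finite_measure.emeasure_eq_measure[OF prob_space.finite_measure[OF ps_biv[of \<rho>]], of "{p. t < fst p}"]
      using Phi_le1[of t] by (simp add: ennreal_power)
    finally show ?thesis unfolding P_def using Phi_le1[of t] by (simp add: emeasure_eq_measure measure_nonneg ennreal_inj)
  qed
  moreover have "measure P F2 \<le> real n * (Phi t * (1 - Phi w0))"
  proof -
    have "measure P F2 \<le> (\<Sum>i\<in>{..<n}. measure P {\<omega> \<in> space P. \<omega> i \<in> Bad})"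
      unfolding F2_def P_def using Bad_sets by (intro finite_measure_subadditive_finite) auto
    also have "\<dots> = (\<Sum>i\<in>{..<n}. measure (biv_normal \<rho>) Bad)"
    proof (intro sum.cong refl)
      fix i assume "i \<in> {..<n}"
      then have "emeasure P {\<omega> \<in> space P. \<omega> i \<in> Bad} = emeasure (biv_normal \<rho>) Bad"
        unfolding P_def using Bad_sets by (intro emeasure_PiM_Collect_single) auto
      then show "measure P {\<omega> \<in> space P. \<omega> i \<in> Bad} = measure (biv_normal \<rho>) Bad"
        by (simp add: measure_def)
    qed
    also have "\<dots> \<le> real n * (Phi t * (1 - Phi w0))"
      using biv_bad[of \<rho> w0 q t] assms unfolding Bad_def by (simp add: mult_left_mono)
    finally show ?thesis .
  qed
  ultimately show ?thesis using s1 unfolding p_success_G_def P_def[symmetric] Succ_def[symmetric] by linarith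
qed



lemma Phi_bot: "(Phi \<longlongrightarrow> 0) at_bot"
proof -
  interpret real_distribution std_normal by (rule rd_S)
  show ?thesis unfolding Phi_cdf by (rule cdf_lim_at_bot)
qed

lemma Phi_top: "(Phi \<longlongrightarrow> 1) at_top"
proof -
  interpret real_distribution std_normal by (rule rd_S)
  show ?thesis unfolding Phi_cdf by (rule cdf_lim_at_top_prob)
qed

lemma Phi_small: "0 < e \<Longrightarrow> \<exists>x. Phi x < e"
proof -
  assume "0 < e"
  then have "\<forall>\<^sub>F x in at_bot. Phi x < e" using order_tendstoD(2)[OF Phi_bot] by simp
  then obtain N where "\<forall>x\<le>N. Phi x < e" unfolding eventually_at_bot_linorder by blast
  then show ?thesis by blast
qed

lemma pow_bound:
  assumes "0 \<le> x" "x \<le> 1"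
  shows "(1 - x) ^ n \<le> exp (- (real n * x))"
proof -
  have "(1 - x) ^ n \<le> exp (- x) ^ n"
    using assms exp_ge_add_one_self[of "-x"] by (intro power_mono) auto
  also have "\<dots> = exp (- (real n * x))" by (simp add: exp_of_nat_mult[symmetric])
  finally show ?thesis .
qed

theorem mainTheorem9:
  fixes \<alpha> \<rho> \<delta> :: real
  assumes "0 < \<alpha>" "\<alpha> \<le> 1" "0 < \<rho>" "\<rho> \<le> 1" "0 < \<delta>" "\<delta> \<le> 1"
  shows "\<exists>nbar::nat. \<forall>m::nat. \<forall>n::nat. 1 \<le> m \<longrightarrow> m \<le> n \<longrightarrow> nbar \<le> n \<longrightarrow>
           p_success_G n m \<alpha> \<rho> \<ge> 1 - \<delta>"
proof -
  define c where "c = ln (2 / \<delta>)"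
  have c0: "0 < c" unfolding c_def using assms by simp
  have ec: "exp (- c) = \<delta> / 2" unfolding c_def using assms by (simp add: ln_div exp_diff)
  define r0 where "r0 = \<delta> / (2 * c)"
  have r0: "0 < r0" unfolding r0_def using assms c0 by simp
  obtain q where q: "Phi q \<le> \<alpha>" using Phi_small[OF assms(1)] by (auto intro: less_imp_le)
  have "\<forall>\<^sub>F x in at_top. 1 - r0 < Phi x" using order_tendstoD(1)[OF Phi_top] r0 by simp
  moreover have "\<forall>\<^sub>F x in at_top. (0::real) \<le> x" by (rule eventually_ge_at_top)
  ultimately have "\<forall>\<^sub>F x in at_top. 1 - r0 < Phi x \<and> 0 \<le> x" by (rule eventually_conj)
  then obtain N where "\<forall>x\<ge>N. 1 - r0 < Phi x \<and> 0 \<le> x" unfolding eventually_at_top_linorder by blast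
  then obtain w0 where w0: "1 - r0 < Phi w0" "0 \<le> w0" by blast
  define T0 where "T0 = (q - w0) / \<rho>"
  have T0pos: "0 < Phi T0" by (rule Phi_pos)
  define nbar where "nbar = nat \<lceil>c / Phi T0\<rceil> + 1"
  show ?thesis
  proof (intro exI[of _ nbar] allI impI)
    fix m n :: nat assume m: "1 \<le> m" "m \<le> n" and n: "nbar \<le> n"
    have n0: "0 < real n" using n unfolding nbar_def by simp
    have "c / Phi T0 < real n" using n unfolding nbar_def by linarith
    then have cn: "c / real n < Phi T0" using n0 T0pos by (simp add: field_simps)
    have cn0: "0 < c / real n" using c0 n0 by simp
    obtain a where a: "Phi a < c / real n" using Phi_small[OF cn0] by blast
    have "Phi (min a T0) \<le> c / real n" using Phi_mono[of "min a T0" a] a by simp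
    then obtain t where t: "min a T0 \<le> t" "t \<le> T0" "Phi t = c / real n"
    proof -
      have "continuous_on {min a T0..T0} Phi" by (simp add: continuous_at_imp_continuous_on Phi_cont)
      moreover have "min a T0 \<le> T0" by simp
      ultimately show ?thesis using IVT'[of Phi "min a T0" "c / real n" T0] cn \<open>Phi (min a T0) \<le> c / real n\<close> that
        by (metis less_imp_le)
    qed
    have "w0 \<le> q - \<rho> * t"
    proof -
      have "\<rho> * t \<le> \<rho> * T0" using t assms by (simp add: mult_left_mono)
      also have "\<rho> * T0 = q - w0" unfolding T0_def using assms by simp
      finally show ?thesis by simp
    qed
    then have mb: "p_success_G n m \<alpha> \<rho> \<ge> 1 - (1 - Phi t) ^ n - real n * (Phi t * (1 - Phi w0))"
      using main_bound[of \<rho> w0 q t \<alpha> m n] assms w0 q m by simp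
    have "(1 - Phi t) ^ n \<le> \<delta> / 2"
    proof -
      have "(1 - Phi t) ^ n \<le> exp (- (real n * Phi t))"
        using t cn0 cn Phi_le1[of T0] by (intro pow_bound) auto
      also have "real n * Phi t = c" using t n0 by simp
      finally show ?thesis using ec by simp
    qed
    moreover have "real n * (Phi t * (1 - Phi w0)) \<le> \<delta> / 2"
    proof -
      have "real n * (Phi t * (1 - Phi w0)) = c * (1 - Phi w0)" using t n0 by simp
      also have "\<dots> \<le> c * r0" using w0 c0 by (intro mult_left_mono) auto
      also have "\<dots> = \<delta> / 2" unfolding r0_def using c0 by simp
      finally show ?thesis .
    qed
    ultimately show "p_success_G n m \<alpha> \<rho> \<ge> 1 - \<delta>" using mb by linarith
  qed
qed

end
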